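(* Let $I$ be an invertible right ideal of $\mathbb{Z}[D_{2n}]$ and let $I^{-1}$ be its left inverse (left dual). Let $\Lambda$ and $\Lambda^{-1}$ be the lattices in $\mathbb{R}^{2n}$ obtained from $I$ and $I^{-1}$ respectively by the coefficient embedding. Then the dual lattice $\Lambda^*$ and $\Lambda^{-1}$ coincide up to a permutation of coordinates.
   Context: $D_{2n}$ is the dihedral group of order $2n$ generated by $\mathfrak{r},\mathfrak{s}$ with $\mathfrak{r}^n=\mathfrak{s}^2=1$, $\mathfrak{s}\mathfrak{r}\mathfrak{s}=\mathfrak{r}^{-1}$. The coefficient embedding identifies $\mathbb{Q}[D_{2n}]\subset\mathbb{R}[D_{2n}]$ with (a subset of) $\mathbb{R}^{2n}$ by sending $\sum_{i=0}^{n-1}x_i\mathfrak{r}^i+\sum_{j=0}^{n-1}y_j\mathfrak{s}\mathfrak{r}^j$ to $(x_0,\dots,x_{n-1},y_0,\dots,y_{n-1})$. For a right ideal $I$ of $\mathbb{Z}[D_{2n}]$, its left dual is $I^{-1}=\{x\in\mathbb{Q}[D_{2n}] : xy\in\mathbb{Z}[D_{2n}]\ \forall y\in I\}$, and $I$ is invertible if $I^{-1}I=\mathbb{Z}[D_{2n}]$. The dual of a lattice $L\subset\mathbb{R}^m$ is $L^*=\{u\in\mathbb{R}^m : \langle u,v\rangle\in\mathbb{Z}\ \forall v\in L\}$. *)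

theory Defs
  imports "HOL-Analysis.Analysis" "HOL-Combinatorics.Permutations"
begin

text \<open>Elements of R[D_2n] are represented directly by their coefficient vectors
  in R^(2n), i.e. functions v :: nat => real vanishing at indices >= 2n.
  Index k < n is the coefficient of r^k, index n + j (j < n) that of s r^j.
  Thus the coefficient embedding is the identity in this representation.\<close>

definition vspace :: "nat \<Rightarrow> (nat \<Rightarrow> real) set" where
  "vspace n = {v. \<forall>k\<ge>2*n. v k = 0}"

definition ZG :: "nat \<Rightarrow> (nat \<Rightarrow> real) set" where
  "ZG n = {v \<in> vspace n. \<forall>k. v k \<in> \<int>}"

definition QG :: "nat \<Rightarrow> (nat \<Rightarrow> real) set" where
  "QG n = {v \<in> vspace n. \<forall>k. v k \<in> \<rat>}"

text \<open>Index of the product of basis elements: (s^a r^i)(s^b r^j) = s^(a+b) r^((-1)^b i + j).\<close>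
definition dmul :: "nat \<Rightarrow> nat \<Rightarrow> nat \<Rightarrow> nat" where
  "dmul n k l =
     (let a = (n \<le> k); i = k mod n; b = (n \<le> l); j = l mod n;
          e = (if b then (n - i + j) mod n else (i + j) mod n)
      in if a \<noteq> b then n + e else e)"

definition gmul :: "nat \<Rightarrow> (nat \<Rightarrow> real) \<Rightarrow> (nat \<Rightarrow> real) \<Rightarrow> (nat \<Rightarrow> real)" where
  "gmul n x y = (\<lambda>m. \<Sum>k<2*n. \<Sum>l<2*n. if dmul n k l = m then x k * y l else 0)"

definition right_ideal :: "nat \<Rightarrow> (nat \<Rightarrow> real) set \<Rightarrow> bool" where
  "right_ideal n I \<longleftrightarrow> I \<subseteq> ZG n \<and> (\<lambda>_. 0) \<in> I
     \<and> (\<forall>x\<in>I. \<forall>y\<in>I. (\<lambda>k. x k + y k) \<in> I)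
     \<and> (\<forall>x\<in>I. (\<lambda>k. - x k) \<in> I)
     \<and> (\<forall>x\<in>I. \<forall>r\<in>ZG n. gmul n x r \<in> I)"

definition left_dual :: "nat \<Rightarrow> (nat \<Rightarrow> real) set \<Rightarrow> (nat \<Rightarrow> real) set" where
  "left_dual n I = {x \<in> QG n. \<forall>y\<in>I. gmul n x y \<in> ZG n}"

definition ideal_prod :: "nat \<Rightarrow> (nat \<Rightarrow> real) set \<Rightarrow> (nat \<Rightarrow> real) set \<Rightarrow> (nat \<Rightarrow> real) set" where
  "ideal_prod n A B = {v. \<exists>(m::nat) a b. (\<forall>i<m. a i \<in> A \<and> b i \<in> B)
        \<and> v = (\<lambda>k. \<Sum>i<m. gmul n (a i) (b i) k)}"

definition invertible_right_ideal :: "nat \<Rightarrow> (nat \<Rightarrow> real) set \<Rightarrow> bool" where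
  "invertible_right_ideal n I \<longleftrightarrow> right_ideal n I \<and> ideal_prod n (left_dual n I) I = ZG n"

definition full_rank :: "nat \<Rightarrow> (nat \<Rightarrow> real) set \<Rightarrow> bool" where
  "full_rank n L \<longleftrightarrow> (\<forall>w\<in>vspace n. \<exists>(m::nat) a c. (\<forall>i<m. a i \<in> L)
        \<and> w = (\<lambda>k. \<Sum>i<m. c i * a i k))"

definition dual_lattice :: "nat \<Rightarrow> (nat \<Rightarrow> real) set \<Rightarrow> (nat \<Rightarrow> real) set" where
  "dual_lattice n L = {u \<in> vspace n. \<forall>v\<in>L. (\<Sum>k<2*n. u k * v k) \<in> \<int>}"

end

theory Submission imports Defs "Jordan_Normal_Form.Determinant" begin


definition sig :: "nat \<Rightarrow> nat \<Rightarrow> nat" where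
  "sig n k = (if k < n then (n - k) mod n else k)"

lemma aux_if: "(e::nat) < n \<Longrightarrow> (if c then n + e else e) < 2*n \<and> (n \<le> (if c then n + e else e)) = c
   \<and> (if c then n + e else e) mod n = e"
  by auto

lemma dmul_alt: "dmul n k l = (let a = (n \<le> k); i = k mod n; b = (n \<le> l); j = l mod n;
          e = (if b then (n - i + j) mod n else (i + j) mod n)
      in if a \<noteq> b then n + e else e)" by (rule dmul_def)

lemma dmul_e: "n \<ge> 1 \<Longrightarrow> \<exists>e c. e < n \<and> dmul n k l = (if c then n + e else e) \<and> c = ((n\<le>k) \<noteq> (n\<le>l))
   \<and> e = (if n \<le> l then (n - k mod n + l mod n) mod n else (k mod n + l mod n) mod n)"
  unfolding dmul_def Let_def by auto

lemma dmul_lt: "n \<ge> 1 \<Longrightarrow> dmul n k l < 2*n"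
  using dmul_e[of n k l] aux_if by metis

lemma dmul_R: "n \<ge> 1 \<Longrightarrow> (n \<le> dmul n k l) = ((n\<le>k) \<noteq> (n\<le>l))"
  using dmul_e[of n k l] aux_if by metis

lemma dmul_T: "n \<ge> 1 \<Longrightarrow> int (dmul n k l mod n) =
   (if n \<le> l then (int (l mod n) - int (k mod n)) mod int n else (int (k mod n) + int (l mod n)) mod int n)"
proof -
  assume n: "n \<ge> 1"
  have i: "k mod n < n" using n by auto
  have A: "int ((n - k mod n + l mod n) mod n) = (int (l mod n) - int (k mod n)) mod int n"
  proof -
    have "int ((n - k mod n + l mod n) mod n) = (int (n - k mod n + l mod n)) mod int n"
      by (simp only: of_nat_mod)
    also have "int (n - k mod n + l mod n) = int n + (int (l mod n) - int (k mod n))" using i by simp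
    also have "(int n + (int (l mod n) - int (k mod n))) mod int n = (int (l mod n) - int (k mod n)) mod int n"
      by (rule mod_add_self1)
    finally show ?thesis .
  qed
  have B: "int ((k mod n + l mod n) mod n) = (int (k mod n) + int (l mod n)) mod int n"
    by (simp add: of_nat_mod)
  obtain e c where ec: "e < n" "dmul n k l = (if c then n + e else e)"
     "e = (if n \<le> l then (n - k mod n + l mod n) mod n else (k mod n + l mod n) mod n)"
    using dmul_e[OF n, of k l] by blast
  have "dmul n k l mod n = e" using ec(1,2) aux_if by metis
  then show ?thesis using A B ec(3) by auto
qed

lemma idx_decomp: "(k::nat) < 2*n \<Longrightarrow> k = (if n \<le> k then n + k mod n else k mod n)"
  by (auto simp: le_mod_geq)

lemma idx_eq: "n \<ge> 1 \<Longrightarrow> k < 2*n \<Longrightarrow> l < 2*n \<Longrightarrow> k = l \<longleftrightarrow> ((n\<le>k) = (n\<le>l) \<and> int (k mod n) = int (l mod n))"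
proof -
  assume a: "n \<ge> 1" "k < 2*n" "l < 2*n"
  show ?thesis
  proof
    assume "(n\<le>k) = (n\<le>l) \<and> int (k mod n) = int (l mod n)"
    then have "(n\<le>k) = (n\<le>l)" "k mod n = l mod n" by auto
    then show "k = l" using idx_decomp[OF a(2)] idx_decomp[OF a(3)] by presburger
  qed auto
qed

lemma sig_lt: "n \<ge> 1 \<Longrightarrow> k < 2*n \<Longrightarrow> sig n k < 2*n"
  unfolding sig_def using mod_less_divisor[of n "n-k"] by (auto simp del: mod_less_divisor)
lemma sig_R: "n \<ge> 1 \<Longrightarrow> (n \<le> sig n k) = (n \<le> k)"
  unfolding sig_def using mod_less_divisor[of n "n-k"] by (auto simp del: mod_less_divisor)
lemma sig_T: "n \<ge> 1 \<Longrightarrow> k < 2*n \<Longrightarrow> int (sig n k mod n) = (if n \<le> k then int (k mod n) else (- int (k mod n)) mod int n)"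
proof -
  assume n: "n \<ge> 1" "k < 2*n"
  show ?thesis
  proof (cases "k < n")
    case True
    have "int ((n - k) mod n) = (int n + (- int k)) mod int n"
      using True by (simp add: of_nat_mod of_nat_diff)
    also have "\<dots> = (- int k) mod int n" by simp
    finally show ?thesis using True unfolding sig_def by simp
  qed (auto simp: sig_def)
qed
lemma sig_sig: "n \<ge> 1 \<Longrightarrow> k < 2*n \<Longrightarrow> sig n (sig n k) = k"
  unfolding sig_def by (cases "k = 0") auto

lemma modeq_c: "(0::int) \<le> c \<Longrightarrow> c < n \<Longrightarrow> (X mod n = c) = (n dvd (X - c))"
  by (metis mod_eq_dvd_iff mod_pos_pos_trivial)

lemma dvd_pm: "x = y \<or> x = - y \<Longrightarrow> ((n::int) dvd x) = (n dvd y)" by auto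

lemma abs_A:
  fixes a b c n :: int
  assumes "0 < n" "0 \<le> c" "c < n"
  shows "((p \<noteq> ((q \<noteq> r))) = False \<and>
     (if q \<noteq> r then ((if r then (c - b) mod n else (b + (-c) mod n) mod n) - a) mod n
      else (a + (if r then (c - b) mod n else (b + (-c) mod n) mod n)) mod n) = 0)
   \<longleftrightarrow> ((p \<noteq> q) = r \<and> (if q then (b - a) mod n else (a + b) mod n) = c)"
proof -
  show ?thesis using assms
    apply (cases p; cases q; cases r)
    apply (simp_all add: modeq_c mod_simps mod_eq_0_iff_dvd)
    apply (rule dvd_pm, simp add: algebra_simps)+
    done
qed


lemma det_Ints:
  assumes A: "(A::real mat) \<in> carrier_mat N N" and I: "\<And>i j. i < N \<Longrightarrow> j < N \<Longrightarrow> A $$ (i,j) \<in> \<int>"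
  shows "det A \<in> \<int>"
proof -
  have "det A = (\<Sum> p \<in> {p. p permutes {0 ..< N}}. signof p * (\<Prod> i = 0 ..< N. A $$ (i, p i)))"
    using det_def'[OF A] .
  also have "\<dots> \<in> \<int>"
  proof (intro Ints_sum Ints_mult Ints_prod)
    fix p i assume p: "p \<in> {p. p permutes {0 ..< N}}" and i: "i \<in> {0..<N}"
    have "p i < N" using permutes_in_image[of p "{0..<N}" i] p i by auto
    then show "A $$ (i, p i) \<in> \<int>" using I i by auto
  qed auto
  finally show ?thesis .
qed

lemma lin_rat:
  fixes F :: "(nat \<Rightarrow> real) set" and u :: "nat \<Rightarrow> real"
  assumes fin: "finite F"
    and intF: "\<And>a j. a \<in> F \<Longrightarrow> a j \<in> \<int>"
    and inj: "\<And>x. (\<forall>a\<in>F. (\<Sum>j<N. a j * x j) = 0) \<Longrightarrow> (\<forall>j<N. x j = 0)"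
    and intu: "\<And>a. a \<in> F \<Longrightarrow> (\<Sum>j<N. a j * u j) \<in> \<int>"
    and k: "k < N"
  shows "u k \<in> \<rat>"
proof -
  define G :: "real mat" where "G = mat N N (\<lambda>(i,j). \<Sum>a\<in>F. a i * a j)"
  define xv where "xv = vec N u"
  have G: "G \<in> carrier_mat N N" unfolding G_def by simp
  have xv: "xv \<in> carrier_vec N" unfolding xv_def by simp
  define b where "b = G *\<^sub>v xv"
  have b: "b \<in> carrier_vec N" unfolding b_def using G xv by simp
  have bi: "b $ i = (\<Sum>a\<in>F. a i * (\<Sum>j<N. a j * u j))" if i: "i < N" for i
  proof -
    have "b $ i = (\<Sum>j<N. (\<Sum>a\<in>F. a i * a j) * u j)"
      unfolding b_def G_def xv_def using i
      by (simp add: mult_mat_vec_def scalar_prod_def atLeast0LessThan)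
    also have "\<dots> = (\<Sum>a\<in>F. a i * (\<Sum>j<N. a j * u j))"
      by (simp add: sum_distrib_left sum_distrib_right sum.swap[of _ F] mult.assoc mult.left_commute)
    finally show ?thesis .
  qed
  have bint: "b $ i \<in> \<int>" if "i < N" for i
    unfolding bi[OF that] by (rule Ints_sum, rule Ints_mult) (auto simp: intF intu)
  have detG: "det G \<noteq> 0"
  proof
    assume "det G = 0"
    then obtain v where v: "v \<in> carrier_vec N" "v \<noteq> 0\<^sub>v N" "G *\<^sub>v v = 0\<^sub>v N"
      using det_0_iff_vec_prod_zero[OF G] by blast
    define s where "s a = (\<Sum>j<N. a j * v $ j)" for a
    have Gv: "(G *\<^sub>v v) $ i = (\<Sum>a\<in>F. a i * s a)" if i: "i < N" for i
    proof -
      have "(G *\<^sub>v v) $ i = (\<Sum>j<N. (\<Sum>a\<in>F. a i * a j) * v $ j)"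
        unfolding G_def using i v(1)
        by (simp add: mult_mat_vec_def scalar_prod_def atLeast0LessThan)
      also have "\<dots> = (\<Sum>a\<in>F. a i * s a)" unfolding s_def
        by (simp add: sum_distrib_left sum_distrib_right sum.swap[of _ F] mult.assoc mult.left_commute)
      finally show ?thesis .
    qed
    have "0 = (\<Sum>i<N. v $ i * (G *\<^sub>v v) $ i)" using v(3) by simp
    also have "\<dots> = (\<Sum>i<N. v $ i * (\<Sum>a\<in>F. a i * s a))" using Gv by simp
    also have "\<dots> = (\<Sum>a\<in>F. s a * s a)" unfolding s_def
      by (simp add: sum_distrib_left sum_distrib_right sum.swap[of _ F] mult.assoc mult.left_commute mult.commute)
    finally have "(\<Sum>a\<in>F. s a * s a) = 0" by simp
    then have "\<forall>a\<in>F. s a * s a = 0" using fin by (subst (asm) sum_nonneg_eq_0_iff) auto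
    then have "\<forall>a\<in>F. (\<Sum>j<N. a j * v $ j) = 0" unfolding s_def by simp
    from inj[OF this] have "\<forall>j<N. v $ j = 0" .
    then have "v = 0\<^sub>v N" using v(1) by (intro eq_vecI) auto
    with v(2) show False by simp
  qed
  have cr: "det (replace_col G b k) = xv $ k * det G"
    unfolding b_def by (rule cramer_lemma_mat[OF G xv k])
  have "det (replace_col G b k) \<in> \<int>"
  proof (rule det_Ints)
    show "replace_col G b k \<in> carrier_mat N N" using G by (simp add: replace_col_def)
    fix i j assume ij: "i < N" "j < N"
    have Gint: "G $$ (i,j) \<in> \<int>" unfolding G_def using ij intF by (auto intro!: Ints_sum Ints_mult)
    show "replace_col G b k $$ (i, j) \<in> \<int>"
      using ij G bint Gint by (auto simp: replace_col_def)
  qed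
  moreover have "det G \<in> \<int>"
    by (rule det_Ints[OF G]) (auto simp: G_def intF intro!: Ints_sum Ints_mult)
  ultimately have "det (replace_col G b k) / det G \<in> \<rat>"
    using Ints_subset_Rats by (intro Rats_divide) auto
  also have "det (replace_col G b k) / det G = u k"
    using cr detG k by (simp add: xv_def)
  finally show ?thesis .
qed

lemma abs_B:
  fixes b c n :: int
  assumes "0 < n" "0 \<le> b" "b < n" "0 \<le> c" "c < n"
  shows "((q \<noteq> r) = False \<and> (if r then (c - b) mod n else (b + c) mod n) = 0)
     \<longleftrightarrow> (q = r \<and> b = (if r then c else (- c) mod n))"
proof -
  have s: "(b = X) = (X = b)" for X by auto
  show ?thesis using assms
    apply (cases q; cases r)
    apply (simp_all add: s modeq_c mod_simps mod_eq_0_iff_dvd)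
    apply (metis mod_eq_dvd_iff mod_pos_pos_trivial)
    apply (rule dvd_pm, simp add: algebra_simps)
    done
qed

lemma dmul0:
  assumes n: "n \<ge> 1" and k: "k < 2*n" and l: "l < 2*n"
  shows "dmul n k l = 0 \<longleftrightarrow> k = sig n l"
proof -
  have z: "0 < 2*n" using n by simp
  have "dmul n k l = 0 \<longleftrightarrow> (n \<le> dmul n k l) = (n \<le> 0) \<and> int (dmul n k l mod n) = int (0 mod n)"
    by (rule idx_eq[OF n dmul_lt[OF n] z])
  also have "\<dots> \<longleftrightarrow> (((n\<le>k) \<noteq> (n\<le>l)) = False \<and>
     (if n \<le> l then (int (l mod n) - int (k mod n)) mod int n else (int (k mod n) + int (l mod n)) mod int n) = 0)"
    using n by (simp add: dmul_R dmul_T)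
  also have "\<dots> \<longleftrightarrow> ((n\<le>k) = (n\<le>l) \<and> int (k mod n) = (if n \<le> l then int (l mod n) else (- int (l mod n)) mod int n))"
    by (rule abs_B) (use n in auto)
  also have "\<dots> \<longleftrightarrow> (n \<le> k) = (n \<le> sig n l) \<and> int (k mod n) = int (sig n l mod n)"
    using n l by (simp add: sig_R sig_T)
  also have "\<dots> \<longleftrightarrow> k = sig n l"
    by (rule idx_eq[OF n k sig_lt[OF n l], symmetric])
  finally show ?thesis .
qed

lemma dmulA:
  assumes n: "n \<ge> 1" and k': "k' < 2*n" and k: "k < 2*n" and m: "m < 2*n"
  shows "dmul n k' (dmul n k (sig n m)) = 0 \<longleftrightarrow> dmul n k' k = m"
proof -
  have z: "0 < 2*n" using n by simp
  have "dmul n k' (dmul n k (sig n m)) = 0 \<longleftrightarrow>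
     (n \<le> dmul n k' (dmul n k (sig n m))) = (n \<le> 0) \<and> int (dmul n k' (dmul n k (sig n m)) mod n) = int (0 mod n)"
    by (rule idx_eq[OF n dmul_lt[OF n] z])
  also have "\<dots> \<longleftrightarrow> (((n\<le>k') \<noteq> (((n\<le>k) \<noteq> (n\<le>m)))) = False \<and>
     (if (n\<le>k) \<noteq> (n\<le>m) then ((if (n\<le>m) then (int (m mod n) - int (k mod n)) mod int n
             else (int (k mod n) + (- int (m mod n)) mod int n) mod int n) - int (k' mod n)) mod int n
      else (int (k' mod n) + (if (n\<le>m) then (int (m mod n) - int (k mod n)) mod int n
             else (int (k mod n) + (- int (m mod n)) mod int n) mod int n)) mod int n) = 0)"
    using n m by (simp add: dmul_R dmul_T sig_R sig_T)
  also have "\<dots> \<longleftrightarrow> (((n\<le>k') \<noteq> (n\<le>k)) = (n\<le>m) \<and>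
       (if (n\<le>k) then (int (k mod n) - int (k' mod n)) mod int n else (int (k' mod n) + int (k mod n)) mod int n) = int (m mod n))"
    by (rule abs_A) (use n in auto)
  also have "\<dots> \<longleftrightarrow> (n \<le> dmul n k' k) = (n \<le> m) \<and> int (dmul n k' k mod n) = int (m mod n)"
    using n by (simp add: dmul_R dmul_T)
  also have "\<dots> \<longleftrightarrow> dmul n k' k = m"
    by (rule idx_eq[OF n dmul_lt[OF n] m, symmetric])
  finally show ?thesis .
qed


definition basis :: "nat \<Rightarrow> nat \<Rightarrow> real" where
  "basis l = (\<lambda>k. if k = l then 1 else 0)"

lemma sig_out: "\<not> k < n \<Longrightarrow> sig n k = k" unfolding sig_def by simp

lemma sig_sig_all: "n \<ge> 1 \<Longrightarrow> sig n (sig n k) = k"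
  by (cases "k < 2*n") (auto simp: sig_sig sig_out)

lemma gmul_0:
  assumes n: "n \<ge> 1"
  shows "gmul n x v 0 = (\<Sum>l<2*n. x (sig n l) * v l)"
proof -
  have "gmul n x v 0 = (\<Sum>k<2*n. \<Sum>l<2*n. if dmul n k l = 0 then x k * v l else 0)"
    unfolding gmul_def by simp
  also have "\<dots> = (\<Sum>k<2*n. \<Sum>l<2*n. if k = sig n l then x k * v l else 0)"
    by (intro sum.cong refl) (simp add: dmul0[OF n])
  also have "\<dots> = (\<Sum>l<2*n. \<Sum>k<2*n. if k = sig n l then x k * v l else 0)"
    by (rule sum.swap)
  also have "\<dots> = (\<Sum>l<2*n. x (sig n l) * v l)"
    by (rule sum.cong[OF refl]) (simp add: sig_lt[OF n])
  finally show ?thesis .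
qed

lemma gmul_basis:
  assumes n: "n \<ge> 1" and l: "l < 2*n"
  shows "gmul n y (basis l) p = (\<Sum>k<2*n. if dmul n k l = p then y k else 0)"
proof -
  have "gmul n y (basis l) p = (\<Sum>k<2*n. \<Sum>l'<2*n. if l' = l then (if dmul n k l = p then y k else 0) else 0)"
    unfolding gmul_def basis_def by (intro sum.cong refl) auto
  also have "\<dots> = (\<Sum>k<2*n. if dmul n k l = p then y k else 0)"
    using l by (simp add: sum.delta)
  finally show ?thesis .
qed

lemma gmul_key:
  assumes n: "n \<ge> 1" and m: "m < 2*n"
  shows "gmul n x (gmul n y (basis (sig n m))) 0 = gmul n x y m"
proof -
  let ?l = "sig n m"
  have l: "?l < 2*n" using sig_lt[OF n m] .
  have "gmul n x (gmul n y (basis ?l)) 0 =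
     (\<Sum>k'<2*n. \<Sum>p<2*n. if dmul n k' p = 0 then x k' * (\<Sum>k<2*n. if dmul n k ?l = p then y k else 0) else 0)"
    unfolding gmul_def[of n x] by (intro sum.cong refl) (simp add: gmul_basis[OF n l])
  also have "\<dots> = (\<Sum>k'<2*n. \<Sum>p<2*n. \<Sum>k<2*n. if p = dmul n k ?l then (if dmul n k' p = 0 then x k' * y k else 0) else 0)"
  proof (rule sum.cong[OF refl], rule sum.cong[OF refl])
    fix k' p
    show "(if dmul n k' p = 0 then x k' * (\<Sum>k<2*n. if dmul n k ?l = p then y k else 0) else 0) =
      (\<Sum>k<2*n. if p = dmul n k ?l then (if dmul n k' p = 0 then x k' * y k else 0) else 0)"
    proof (cases "dmul n k' p = 0")
      case True
      have "x k' * (\<Sum>k<2*n. if dmul n k ?l = p then y k else 0) = (\<Sum>k<2*n. x k' * (if dmul n k ?l = p then y k else 0))"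
        by (rule sum_distrib_left)
      also have "\<dots> = (\<Sum>k<2*n. if p = dmul n k ?l then (if dmul n k' p = 0 then x k' * y k else 0) else 0)"
        by (rule sum.cong[OF refl]) (use True in auto)
      finally show ?thesis using True by simp
    qed (auto intro!: sum.neutral)
  qed
  also have "\<dots> = (\<Sum>k'<2*n. \<Sum>k<2*n. \<Sum>p<2*n. if p = dmul n k ?l then (if dmul n k' p = 0 then x k' * y k else 0) else 0)"
    by (rule sum.cong[OF refl], rule sum.swap)
  also have "\<dots> = (\<Sum>k'<2*n. \<Sum>k<2*n. if dmul n k' (dmul n k ?l) = 0 then x k' * y k else 0)"
    by (intro sum.cong refl) (simp add: sum.delta dmul_lt[OF n])
  also have "\<dots> = (\<Sum>k'<2*n. \<Sum>k<2*n. if dmul n k' k = m then x k' * y k else 0)"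
    by (intro sum.cong refl) (simp add: dmulA[OF n _ _ m])
  also have "\<dots> = gmul n x y m" unfolding gmul_def by simp
  finally show ?thesis .
qed

lemma basis_ZG: "l < 2*n \<Longrightarrow> basis l \<in> ZG n"
  unfolding ZG_def vspace_def basis_def by auto

lemma gmul_vspace: "n \<ge> 1 \<Longrightarrow> gmul n x y \<in> vspace n"
  unfolding vspace_def gmul_def using dmul_lt[of n] by (auto intro!: sum.neutral) (metis leD)

lemma dual_rat:
  assumes n: "n \<ge> 1" and IZ: "I \<subseteq> ZG n" and fr: "full_rank n I"
    and u: "u \<in> dual_lattice n I"
  shows "u k \<in> \<rat>"
proof (cases "k < 2*n")
  case False
  then show ?thesis using u unfolding dual_lattice_def vspace_def by auto
next
  case True
  have "\<exists>(m::nat) (a::nat \<Rightarrow> nat \<Rightarrow> real) (c::nat \<Rightarrow> real). j < 2*n \<longrightarrow> ((\<forall>i<m. a i \<in> I) \<and> basis j = (\<lambda>k. \<Sum>i<m. c i * a i k))" for j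
  proof (cases "j < 2*n")
    case True
    then have "basis j \<in> vspace n" using basis_ZG unfolding ZG_def by auto
    then obtain m :: nat and a :: "nat \<Rightarrow> nat \<Rightarrow> real" and c :: "nat \<Rightarrow> real" where "(\<forall>i<m. a i \<in> I) \<and> basis j = (\<lambda>k. \<Sum>i<m. c i * a i k)"
      using fr unfolding full_rank_def by blast
    then show ?thesis by blast
  qed auto
  then have h1: "\<forall>j. \<exists>m. \<exists>(a::nat \<Rightarrow> nat \<Rightarrow> real) (c::nat \<Rightarrow> real). j < 2*n \<longrightarrow> ((\<forall>i<m. a i \<in> I) \<and> basis j = (\<lambda>k. \<Sum>i<m. c i * a i k))"
    by blast
  obtain M where h2: "\<forall>j. \<exists>(a::nat \<Rightarrow> nat \<Rightarrow> real) (c::nat \<Rightarrow> real). j < 2*n \<longrightarrow> ((\<forall>i<M j. a i \<in> I) \<and> basis j = (\<lambda>k. \<Sum>i<M j. c i * a i k))"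
    using choice[OF h1] by blast
  obtain A where h3: "\<forall>j. \<exists>(c::nat \<Rightarrow> real). j < 2*n \<longrightarrow> ((\<forall>i<M j. A j i \<in> I) \<and> basis j = (\<lambda>k. \<Sum>i<M j. c i * A j i k))"
    using choice[OF h2] by blast
  obtain C where h4: "\<forall>j. j < 2*n \<longrightarrow> ((\<forall>i<M j. A j i \<in> I) \<and> basis j = (\<lambda>k. \<Sum>i<M j. C j i * A j i k))"
    using choice[OF h3] by blast
  have MAC: "\<And>j. j < 2*n \<Longrightarrow> (\<forall>i<M j. A j i \<in> I) \<and> basis j = (\<lambda>k. \<Sum>i<M j. C j i * A j i k)"
    using h4 by blast
  define F where "F = (\<Union>j<2*n. A j ` {..<M j})"
  have finF: "finite F" unfolding F_def by auto
  have FI: "F \<subseteq> I" unfolding F_def using MAC by auto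
  show ?thesis
  proof (rule lin_rat[OF finF _ _ _ True])
    fix a j assume "a \<in> F" then show "a j \<in> \<int>" using FI IZ unfolding ZG_def by auto
  next
    fix a assume "a \<in> F"
    then have "a \<in> I" using FI by auto
    then have "(\<Sum>k<2*n. u k * a k) \<in> \<int>" using u unfolding dual_lattice_def by auto
    then show "(\<Sum>j<2*n. a j * u j) \<in> \<int>" by (simp add: mult.commute)
  next
    fix x assume h: "\<forall>a\<in>F. (\<Sum>j<2*n. a j * x j) = 0"
    show "\<forall>j<2*n. x j = 0"
    proof (intro allI impI)
      fix j assume j: "j < 2*n"
      have bb: "(\<Sum>j'<2*n. basis j j' * x j') = (\<Sum>j'<2*n. if j' = j then x j else 0)"
        by (rule sum.cong[OF refl]) (simp add: basis_def)
      have "x j = (\<Sum>j'<2*n. basis j j' * x j')"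
        unfolding bb using j by simp
      also have "\<dots> = (\<Sum>j'<2*n. (\<Sum>i<M j. C j i * A j i j') * x j')"
        using MAC[OF j] by simp
      also have "\<dots> = (\<Sum>i<M j. C j i * (\<Sum>j'<2*n. A j i j' * x j'))"
        by (simp add: sum_distrib_left sum_distrib_right sum.swap[of _ "{..<M j}"] mult.assoc)
      also have "\<dots> = 0"
      proof (rule sum.neutral, rule ballI)
        fix i assume "i \<in> {..<M j}"
        then have "A j i \<in> F" unfolding F_def using j by auto
        then show "C j i * (\<Sum>j'<2*n. A j i j' * x j') = 0" using h by simp
      qed
      finally show "x j = 0" .
    qed
  qed
qed

theorem lemma3:
  fixes n :: nat and I :: "(nat \<Rightarrow> real) set"
  assumes "n \<ge> 1"
    and "invertible_right_ideal n I"
    and "full_rank n I"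
  shows "\<exists>\<sigma>. \<sigma> permutes {..<2*n} \<and>
           dual_lattice n I = (\<lambda>v. v \<circ> \<sigma>) ` left_dual n I"
proof -
  note n = assms(1)
  have ri: "right_ideal n I" using assms(2) unfolding invertible_right_ideal_def by auto
  have IZ: "I \<subseteq> ZG n" using ri unfolding right_ideal_def by auto
  have Imul: "\<And>x r. x \<in> I \<Longrightarrow> r \<in> ZG n \<Longrightarrow> gmul n x r \<in> I" using ri unfolding right_ideal_def by auto
  have perm: "sig n permutes {..<2*n}"
  proof (rule bij_imp_permutes)
    show "bij_betw (sig n) {..<2 * n} {..<2 * n}"
      by (rule bij_betwI[where g="sig n"]) (auto simp: sig_lt[OF n] sig_sig_all[OF n])
    fix x assume "x \<notin> {..<2*n}" then show "sig n x = x" by (intro sig_out) auto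
  qed
  have ss: "\<And>v. (v \<circ> sig n) \<circ> sig n = v" by (rule ext) (simp add: sig_sig_all[OF n])
  have dsub: "u \<circ> sig n \<in> left_dual n I" if u: "u \<in> dual_lattice n I" for u
  proof -
    let ?x = "u \<circ> sig n"
    have uv: "u \<in> vspace n" using u unfolding dual_lattice_def by auto
    have xv: "?x \<in> vspace n" using uv unfolding vspace_def by (auto simp: sig_out)
    have xq: "?x k \<in> \<rat>" for k using dual_rat[OF n IZ assms(3) u] by simp
    have "gmul n ?x y \<in> ZG n" if y: "y \<in> I" for y
    proof -
      have "gmul n ?x y m \<in> \<int>" for m
      proof (cases "m < 2*n")
        case False
        then show ?thesis using gmul_vspace[OF n, of ?x y] unfolding vspace_def by auto
      next
        case True
        let ?w = "gmul n y (basis (sig n m))"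
        have w: "?w \<in> I" using Imul[OF y basis_ZG[OF sig_lt[OF n True]]] .
        have "gmul n ?x y m = gmul n ?x ?w 0" using gmul_key[OF n True] by simp
        also have "\<dots> = (\<Sum>l<2*n. u l * ?w l)" by (simp add: gmul_0[OF n] sig_sig_all[OF n])
        finally show ?thesis using u w unfolding dual_lattice_def by auto
      qed
      then show ?thesis using gmul_vspace[OF n] unfolding ZG_def by auto
    qed
    then show ?thesis using xv xq unfolding left_dual_def QG_def by auto
  qed
  have isub: "x \<circ> sig n \<in> dual_lattice n I" if x: "x \<in> left_dual n I" for x
  proof -
    have xv: "x \<in> vspace n" using x unfolding left_dual_def QG_def by auto
    have uv: "x \<circ> sig n \<in> vspace n" using xv unfolding vspace_def by (auto simp: sig_out)
    have "(\<Sum>k<2*n. (x \<circ> sig n) k * v k) \<in> \<int>" if v: "v \<in> I" for v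
    proof -
      have "gmul n x v \<in> ZG n" using x v unfolding left_dual_def by auto
      then have "gmul n x v 0 \<in> \<int>" unfolding ZG_def by auto
      then show ?thesis by (simp add: gmul_0[OF n])
    qed
    then show ?thesis using uv unfolding dual_lattice_def by auto
  qed
  have "dual_lattice n I = (\<lambda>v. v \<circ> sig n) ` left_dual n I"
  proof
    show "dual_lattice n I \<subseteq> (\<lambda>v. v \<circ> sig n) ` left_dual n I"
    proof
      fix u assume u: "u \<in> dual_lattice n I"
      show "u \<in> (\<lambda>v. v \<circ> sig n) ` left_dual n I"
      proof (rule image_eqI[where x="u \<circ> sig n"])
        show "u = (\<lambda>v. v \<circ> sig n) (u \<circ> sig n)" using ss[of u] by metis
      qed (rule dsub[OF u])
    qed
    show "(\<lambda>v. v \<circ> sig n) ` left_dual n I \<subseteq> dual_lattice n I" using isub by auto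
  qed
  then show ?thesis using perm by blast
qed

end
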